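(* Let $K, T \geq 1$ be integers, let $r_{tk}$ ($t = 1,\ldots,T$, $k = 1,\ldots,K$) be real numbers (the return of security $k$ at time $t$), and let $H_1,\ldots,H_K > 0$ be thresholds. For each security $k$ and time $t$, classify the observation $r_{tk}$ as $U$ (up) if $r_{tk} \geq H_k$, as $D$ (down) if $r_{tk} \leq -H_k$, and as $N$ (neutral) if $-H_k < r_{tk} < H_k$. For $p,q \in \{U,N,D\}$ and securities $i,j$, let $n_{ij}^{pq}$ be the number of times $t \in \{1,\ldots,T\}$ at which $r_{ti}$ is in category $p$ and $r_{tj}$ is in category $q$. Assume that $n_{ij}^{NN} < T$ for all $i,j \in \{1,\ldots,K\}$. Define the $K \times K$ matrix $G^{(2)}$ with entries $$g_{ij}^{(2)} = \frac{n_{ij}^{UU} + n_{ij}^{DD} - n_{ij}^{UD} - n_{ij}^{DU}}{T - n_{ij}^{NN}}.$$ Then $G^{(2)}$ is positive semidefinite.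
   Context: In the paper the thresholds are $H_k = c\,\sigma_k$, where $c>0$ is a fixed fraction (e.g. $1/2$) and $\sigma_k$ is the sample standard deviation of the returns of security $k$; the result only uses that the thresholds are positive. The matrix $G^{(2)}$ is called Gerber Statistic 2. *)

theory Defs
  imports Main "HOL.Real"
begin

datatype cat = U | N | D

definition classify :: "real \<Rightarrow> real \<Rightarrow> cat" where
  "classify h x = (if x \<ge> h then U else if x \<le> - h then D else N)"

definition ncount :: "nat \<Rightarrow> (nat \<Rightarrow> nat \<Rightarrow> real) \<Rightarrow> (nat \<Rightarrow> real)
    \<Rightarrow> cat \<Rightarrow> cat \<Rightarrow> nat \<Rightarrow> nat \<Rightarrow> nat" where
  "ncount T r H p q i j =
     card {t \<in> {1..T}. classify (H i) (r t i) = p \<and> classify (H j) (r t j) = q}"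

definition gerber2 :: "nat \<Rightarrow> (nat \<Rightarrow> nat \<Rightarrow> real) \<Rightarrow> (nat \<Rightarrow> real) \<Rightarrow> nat \<Rightarrow> nat \<Rightarrow> real" where
  "gerber2 T r H i j =
     (real (ncount T r H U U i j) + real (ncount T r H D D i j)
      - real (ncount T r H U D i j) - real (ncount T r H D U i j))
     / (real T - real (ncount T r H N N i j))"

definition psd :: "nat \<Rightarrow> (nat \<Rightarrow> nat \<Rightarrow> real) \<Rightarrow> bool" where
  "psd K A \<longleftrightarrow> (\<forall>i\<in>{1..K}. \<forall>j\<in>{1..K}. A i j = A j i) \<and>
     (\<forall>x :: nat \<Rightarrow> real. (\<Sum>i=1..K. \<Sum>j=1..K. x i * A i j * x j) \<ge> 0)"

end

theory Submission
  imports Defs "HOL-Analysis.Analysis"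
begin

lemma pow_int: "((\<lambda>y::real. y ^ n) has_integral (1 / real (Suc n))) {0..1}"
proof -
  have d: "((\<lambda>y::real. y ^ Suc n / real (Suc n)) has_real_derivative y ^ n) (at y within {0..1})" for y
    by (auto intro!: derivative_eq_intros) (cases n, auto simp: field_simps)
  have "((\<lambda>y::real. y ^ n) has_integral ((\<lambda>y. y ^ Suc n / real (Suc n)) 1 - (\<lambda>y. y ^ Suc n / real (Suc n)) 0)) {0..1}"
    apply (rule fundamental_theorem_of_calculus)
     apply simp
    using d has_real_derivative_iff_has_vector_derivative by blast
  then show ?thesis by simp
qed

lemma psd_pow:
  fixes y :: real and B :: "nat \<Rightarrow> nat set" and I :: "nat set"
  assumes y: "0 \<le> y" "y \<le> 1" and V: "finite V"
  shows "0 \<le> (\<Sum>i\<in>I. \<Sum>j\<in>I. x i * x j * y ^ card ((B i \<union> B j) \<inter> V))"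
  using V
proof (induction V arbitrary: x rule: finite_induct)
  case empty
  have "(\<Sum>i\<in>I. \<Sum>j\<in>I. x i * x j * y ^ card ((B i \<union> B j) \<inter> {})) = (\<Sum>i\<in>I. x i) * (\<Sum>i\<in>I. x i)"
    by (simp add: sum_distrib_left sum_distrib_right mult.commute)
  then show ?case by simp
next
  case (insert u V)
  define c where "c i = (if u \<in> B i then 0 else (1::real))" for i
  have e: "y ^ card ((B i \<union> B j) \<inter> insert u V) = y * y ^ card ((B i \<union> B j) \<inter> V)
      + (1 - y) * (c i * c j * y ^ card ((B i \<union> B j) \<inter> V))" for i j
  proof (cases "u \<in> B i \<union> B j")
    case True
    then have "(B i \<union> B j) \<inter> insert u V = insert u ((B i \<union> B j) \<inter> V)" by auto
    moreover have "u \<notin> (B i \<union> B j) \<inter> V" using insert by auto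
    ultimately have "card ((B i \<union> B j) \<inter> insert u V) = Suc (card ((B i \<union> B j) \<inter> V))"
      using insert by simp
    moreover have "c i * c j = 0" using True c_def by auto
    ultimately show ?thesis by simp
  next
    case False
    then have "(B i \<union> B j) \<inter> insert u V = (B i \<union> B j) \<inter> V" by auto
    moreover have "c i = 1" "c j = 1" using False c_def by auto
    ultimately show ?thesis by (simp add: algebra_simps)
  qed
  have "(\<Sum>i\<in>I. \<Sum>j\<in>I. x i * x j * y ^ card ((B i \<union> B j) \<inter> insert u V))
     = y * (\<Sum>i\<in>I. \<Sum>j\<in>I. x i * x j * y ^ card ((B i \<union> B j) \<inter> V))
       + (1 - y) * (\<Sum>i\<in>I. \<Sum>j\<in>I. (x i * c i) * (x j * c j) * y ^ card ((B i \<union> B j) \<inter> V))"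
  proof -
    have "(\<Sum>i\<in>I. \<Sum>j\<in>I. x i * x j * y ^ card ((B i \<union> B j) \<inter> insert u V))
      = (\<Sum>i\<in>I. \<Sum>j\<in>I. y * (x i * x j * y ^ card ((B i \<union> B j) \<inter> V))
       + (1 - y) * ((x i * c i) * (x j * c j) * y ^ card ((B i \<union> B j) \<inter> V)))"
      unfolding e by (intro sum.cong refl) (simp add: algebra_simps)
    then show ?thesis by (simp add: sum.distrib sum_distrib_left)
  qed
  moreover have "0 \<le> (\<Sum>i\<in>I. \<Sum>j\<in>I. x i * x j * y ^ card ((B i \<union> B j) \<inter> V))"
    using insert.IH by blast
  moreover have "0 \<le> (\<Sum>i\<in>I. \<Sum>j\<in>I. (x i * c i) * (x j * c j) * y ^ card ((B i \<union> B j) \<inter> V))"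
    using insert.IH[of "\<lambda>i. x i * c i"] by blast
  ultimately show ?case using y by simp
qed

lemma card_filter_real:
  "finite S \<Longrightarrow> real (card {t\<in>S. P t}) = (\<Sum>t\<in>S. if P t then 1 else 0)"
  by (simp add: sum.If_cases Int_def)

theorem proposition2:
  fixes K T :: nat and r :: "nat \<Rightarrow> nat \<Rightarrow> real" and H :: "nat \<Rightarrow> real"
  assumes "K \<ge> 1" and "T \<ge> 1"
    and "\<And>k. k \<in> {1..K} \<Longrightarrow> H k > 0"
    and "\<And>i j. i \<in> {1..K} \<Longrightarrow> j \<in> {1..K} \<Longrightarrow> ncount T r H N N i j < T"
  shows "psd K (gerber2 T r H)"
proof -
  define cl where "cl t i = classify (H i) (r t i)" for t i
  define sg where "sg t i = (case cl t i of U \<Rightarrow> 1 | N \<Rightarrow> 0 | D \<Rightarrow> (-1::real))" for t i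
  define A where "A i = {t\<in>{1..T}. cl t i \<noteq> N}" for i
  have num: "real (ncount T r H U U i j) + real (ncount T r H D D i j)
      - real (ncount T r H U D i j) - real (ncount T r H D U i j) = (\<Sum>t\<in>{1..T}. sg t i * sg t j)" for i j
  proof -
    have "real (ncount T r H U U i j) + real (ncount T r H D D i j)
      - real (ncount T r H U D i j) - real (ncount T r H D U i j) =
      (\<Sum>t\<in>{1..T}. (if cl t i = U \<and> cl t j = U then 1 else 0) + (if cl t i = D \<and> cl t j = D then 1 else 0)
        - (if cl t i = U \<and> cl t j = D then 1 else 0) - (if cl t i = D \<and> cl t j = U then 1 else 0))"
      unfolding ncount_def cl_def card_filter_real[OF finite_atLeastAtMost] by (simp add: sum.distrib sum_subtractf)
    also have "\<dots> = (\<Sum>t\<in>{1..T}. sg t i * sg t j)"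
      by (rule sum.cong) (auto simp: sg_def split: cat.splits)
    finally show ?thesis .
  qed
  have den: "real T - real (ncount T r H N N i j) = real (card (A i \<union> A j))" for i j
  proof -
    have "A i \<union> A j = {1..T} - {t\<in>{1..T}. cl t i = N \<and> cl t j = N}"
      unfolding A_def by auto
    then have "card (A i \<union> A j) = T - ncount T r H N N i j"
    proof -
      have "card ({1..T} - {t\<in>{1..T}. cl t i = N \<and> cl t j = N}) = card {1..T} - card {t\<in>{1..T}. cl t i = N \<and> cl t j = N}"
        by (rule card_Diff_subset) auto
      then show ?thesis using \<open>A i \<union> A j = _\<close> unfolding ncount_def cl_def by simp
    qed
    moreover have "ncount T r H N N i j \<le> T"
      unfolding ncount_def by (metis (no_types, lifting) card_atLeastAtMost card_mono diff_Suc_1 finite_atLeastAtMost mem_Collect_eq subsetI)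
    ultimately show ?thesis by simp
  qed
  have g: "gerber2 T r H i j = (\<Sum>t\<in>{1..T}. sg t i * sg t j) / real (card (A i \<union> A j))" for i j
    unfolding gerber2_def num den ..
  have sym: "gerber2 T r H i j = gerber2 T r H j i" for i j
    unfolding g by (simp add: Un_commute mult.commute)
  have quad: "0 \<le> (\<Sum>i=1..K. \<Sum>j=1..K. x i * gerber2 T r H i j * x j)" for x :: "nat \<Rightarrow> real"
  proof -
    define v where "v t i = x i * sg t i" for t i
    have "(\<Sum>i=1..K. \<Sum>j=1..K. x i * gerber2 T r H i j * x j)
        = (\<Sum>i=1..K. \<Sum>j=1..K. \<Sum>t\<in>{1..T}. v t i * v t j / real (card (A i \<union> A j)))"
      unfolding g v_def by (simp add: sum_divide_distrib sum_distrib_left sum_distrib_right algebra_simps)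
    also have "\<dots> = (\<Sum>t\<in>{1..T}. \<Sum>i=1..K. \<Sum>j=1..K. v t i * v t j / real (card (A i \<union> A j)))"
      by (subst sum.swap, rule sum.cong, rule refl, rule sum.swap)
    also have "0 \<le> \<dots>"
    proof (rule sum_nonneg)
      fix t assume t: "t \<in> {1..T}"
      define B where "B i = A i - {t}" for i
      have hi: "((\<lambda>y. v t i * v t j * y ^ card ((B i \<union> B j) \<inter> {1..T})) has_integral
              v t i * v t j / real (card (A i \<union> A j))) {0..1}" for i j
      proof (cases "v t i * v t j = 0")
        case True
        then show ?thesis by (simp only: mult_zero_left div_0 has_integral_0)
      next
        case False
        then have "sg t i \<noteq> 0" "sg t j \<noteq> 0" unfolding v_def by auto
        then have "t \<in> A i" using t unfolding sg_def A_def by (auto split: cat.splits)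
        have fin: "finite (A i \<union> A j)" unfolding A_def by auto
        have "(B i \<union> B j) \<inter> {1..T} = (A i \<union> A j) - {t}" unfolding B_def A_def by auto
        moreover have "card (A i \<union> A j) = Suc (card ((A i \<union> A j) - {t}))"
          using \<open>t \<in> A i\<close> fin by (metis Un_iff card_Suc_Diff1)
        ultimately show ?thesis
          using has_integral_mult_right[OF pow_int[of "card ((A i \<union> A j) - {t})"], of "v t i * v t j"]
          by simp
      qed
      have "((\<lambda>y. \<Sum>i=1..K. \<Sum>j=1..K. v t i * v t j * y ^ card ((B i \<union> B j) \<inter> {1..T})) has_integral
            (\<Sum>i=1..K. \<Sum>j=1..K. v t i * v t j / real (card (A i \<union> A j)))) {0..1}"
        by (intro has_integral_sum hi finite_atLeastAtMost)
      then show "0 \<le> (\<Sum>i=1..K. \<Sum>j=1..K. v t i * v t j / real (card (A i \<union> A j)))"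
        by (rule has_integral_nonneg) (auto intro!: psd_pow)
    qed
    finally show ?thesis .
  qed
  show ?thesis unfolding psd_def using sym quad by blast
qed

end
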